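(* Let $N$ be a non-orientable $3$-manifold triangulated by finitely many ideal hyperbolic tetrahedra $A_i$. The triangulation bestows a hyperbolic structure around the edge cycle $[e]=\{e_{i_1,j_1},\dots,e_{i_n,j_n}\}$ if and only if $$\prod_{l=1}^n \frac{z(e_{i_l,j_l})^{\epsilon_l}}{\overline{z(e_{i_l,j_l})}^{\,1-\epsilon_l}}=1\qquad\text{and}\qquad \sum_{l=1}^n\arg\big(z(e_{i_l,j_l})\big)=2\pi,$$ where $z(e_{i_l,j_l})$ is the edge invariant of $e_{i_l,j_l}$ and $\epsilon_l\in\{0,1\}$ is such that, in the gluing around $[e]$, a coherent orientation of the tetrahedra is obtained by gluing a copy of $A_{i_l}$ with its orientation reversed if $\epsilon_l=0$ and with its original orientation if $\epsilon_l=1$, with the orientation of $A_{i_1}$ kept as given.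
   Context: An ideal tetrahedron is a geodesic tetrahedron in $\mathbb{H}^3$ with all vertices on $\partial_\infty\mathbb{H}^3=\mathbb{C}\cup\{\infty\}$. After an orientation-preserving isometry (with respect to the given orientation of the tetrahedron) its vertices are $0,1,\infty,z$, and the edge from $z$ to $\infty$ has edge invariant $z$. An edge cycle is the set of edges of tetrahedra identified to a single edge of $N$. *)

theory Defs
  imports "HOL-Analysis.Analysis"
begin

(* Local model of the gluing of ideal tetrahedra around an edge cycle [e].
   All copies are developed in the upper half space model around the common
   edge from 0 to \<infinity>.  The l-th copy (l = 0..n-1) is the ideal tetrahedron
   with vertices 0, \<infinity>, w l, w (Suc l); consecutive copies share the face
   (0, \<infinity>, w (Suc l)).  *)

(* Edge invariant of the edge 0\<infinity> of the positively oriented ideal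
   tetrahedron with vertices 0, \<infinity>, a, b (normalising a to 1, b becomes
   the edge invariant). *)
definition edge_inv_pos :: "complex \<Rightarrow> complex \<Rightarrow> complex" where
  "edge_inv_pos a b = b / a"

(* Edge invariant, with respect to the ORIGINAL orientation of A_{i_l}, of the
   developed copy with vertices 0, \<infinity>, a, b.  If e = 1 the copy carries its
   original orientation.  If e = 0 it was glued with reversed orientation:
   an orientation preserving (for the original orientation) normalisation is
   then obtained through the mirror image (complex conjugation), in which the
   positive cyclic order of the two remaining vertices is swapped. *)
definition copy_edge_inv :: "nat \<Rightarrow> complex \<Rightarrow> complex \<Rightarrow> complex" where
  "copy_edge_inv e a b =
     (if e = 1 then edge_inv_pos a b else edge_inv_pos (cnj b) (cnj a))"

(* The projection to C of a neighbourhood of the edge 0\<infinity> inside the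
   tetrahedron 0, \<infinity>, a, b : the open wedge spanned by a and b. *)
definition open_wedge :: "complex \<Rightarrow> complex \<Rightarrow> complex set" where
  "open_wedge a b = {of_real s * a + of_real t * b | s t. s > 0 \<and> t > 0}"

(* w is the developing sequence of the cycle: the copies are coherently
   (positively) oriented and carry the prescribed edge invariants. *)
definition developing_seq ::
    "(nat \<Rightarrow> complex) \<Rightarrow> (nat \<Rightarrow> nat) \<Rightarrow> nat \<Rightarrow> (nat \<Rightarrow> complex) \<Rightarrow> bool" where
  "developing_seq z eps n w \<longleftrightarrow>
     w 0 = 1 \<and>
     (\<forall>l<n. w (Suc l) \<noteq> 0 \<and> Im (w (Suc l) / w l) > 0 \<and>
             copy_edge_inv (eps l) (w l) (w (Suc l)) = z l)"

(* The triangulation bestows a hyperbolic structure around the edge: the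
   holonomy around the edge (the Moebius map fixing 0, \<infinity> and sending
   w n to w 0) is trivial, and the developed tetrahedra fit together around
   the edge exactly once (their wedges have disjoint interiors and cover a
   full neighbourhood of the edge). *)
definition hyperbolic_around_edge ::
    "(nat \<Rightarrow> complex) \<Rightarrow> (nat \<Rightarrow> nat) \<Rightarrow> nat \<Rightarrow> bool" where
  "hyperbolic_around_edge z eps n \<longleftrightarrow>
     (\<exists>w. developing_seq z eps n w \<and> w n = w 0 \<and>
        (\<forall>l<n. \<forall>m<n. l \<noteq> m \<longrightarrow>
            open_wedge (w l) (w (Suc l)) \<inter> open_wedge (w m) (w (Suc m)) = {}) \<and>
        (\<Union>l<n. closure (open_wedge (w l) (w (Suc l)))) = UNIV)"

end

theory Submission imports Defs begin
lemma wedge1_iff: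
  assumes "Im q > 0"
  shows "y \<in> open_wedge 1 q \<longleftrightarrow> Im y > 0 \<and> Im (y/q) < 0"
proof
  assume "y \<in> open_wedge 1 q"
  then obtain s t :: real where st: "s > 0" "t > 0" "y = of_real s + of_real t * q"
    unfolding open_wedge_def by auto
  have q0: "q \<noteq> 0" using assms by auto
  have "Im y = t * Im q" using st by simp
  moreover have "y / q = of_real s / q + of_real t" using st q0 by (simp add: field_simps)
  moreover have "Im (of_real s / q) = - s * Im q / (cmod q)^2"
    by (simp add: Im_divide cmod_power2)
  ultimately show "Im y > 0 \<and> Im (y/q) < 0" using st assms q0
    by (simp add: divide_neg_pos)
next
  assume h: "Im y > 0 \<and> Im (y/q) < 0"
  define t where "t = Im y / Im q"
  define s where "s = Re y - t * Re q"
  have q0: "q \<noteq> 0" using assms by auto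
  have nq: "(cmod q)^2 > 0" using q0 by simp
  have "Im (y/q) = (Im y * Re q - Re y * Im q) / (cmod q)^2"
    by (simp add: Im_divide cmod_power2 algebra_simps)
  hence "Im y * Re q - Re y * Im q < 0" using h nq by (simp add: divide_less_0_iff)
  hence "t * Re q < Re y" using assms unfolding t_def
    by (simp add: field_simps)
  hence s0: "s > 0" unfolding s_def by simp
  have t0: "t > 0" using h assms unfolding t_def by simp
  have "y = of_real s + of_real t * q"
    using assms by (simp add: complex_eq_iff s_def t_def)
  thus "y \<in> open_wedge 1 q" unfolding open_wedge_def using s0 t0
    by (intro CollectI exI[of _ s] exI[of _ t]) simp
qed

lemma wedge_scale:
  assumes "a \<noteq> 0"
  shows "x \<in> open_wedge a b \<longleftrightarrow> x / a \<in> open_wedge 1 (b / a)"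
proof -
  have "\<And>s t. (x = of_real s * a + of_real t * b) \<longleftrightarrow> (x / a = of_real s * 1 + of_real t * (b/a))"
    using assms by (auto simp: field_simps)
  thus ?thesis unfolding open_wedge_def by auto
qed

lemma wedge_iff:
  assumes "a \<noteq> 0" "Im (b/a) > 0"
  shows "x \<in> open_wedge a b \<longleftrightarrow> Im (x/a) > 0 \<and> Im (x/b) < 0"
proof -
  have b0: "b \<noteq> 0" using assms by auto
  have "x / a / (b / a) = x / b" using assms b0 by (simp add: field_simps)
  thus ?thesis using wedge_scale[OF assms(1)] wedge1_iff[OF assms(2)] by simp
qed

lemma wedge_rcis_iff:
  assumes "\<rho> > 0" "\<sigma> > 0" "sin (\<beta> - \<alpha>) > 0" "r > 0"
  shows "rcis r \<psi> \<in> open_wedge (rcis \<rho> \<alpha>) (rcis \<sigma> \<beta>) \<longleftrightarrow>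
         sin (\<psi> - \<alpha>) > 0 \<and> sin (\<psi> - \<beta>) < 0"
proof -
  have "Im (rcis \<sigma> \<beta> / rcis \<rho> \<alpha>) > 0" using assms by (simp add: rcis_divide Im_rcis)
  moreover have "rcis \<rho> \<alpha> \<noteq> 0" using assms by simp
  ultimately show ?thesis using assms
    by (simp add: wedge_iff rcis_divide zero_less_divide_iff divide_less_0_iff zero_less_mult_iff mult_less_0_iff)
qed

lemma closure_wedge_ray:
  assumes "c \<ge> 0"
  shows "of_real c * a \<in> closure (open_wedge a b)"
  unfolding closure_approachable
proof (intro allI impI)
  fix e :: real assume e: "e > 0"
  define d where "d = e / (2 * (cmod a + cmod b + 1))"
  have d0: "d > 0" using e unfolding d_def by (simp add: add_nonneg_pos)
  have "of_real (c + d) * a + of_real d * b \<in> open_wedge a b"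
    unfolding open_wedge_def using d0 assms
    by (intro CollectI exI[of _ "c + d"] exI[of _ d]) simp
  moreover have "dist (of_real (c + d) * a + of_real d * b) (of_real c * a) < e"
  proof -
    have "dist (of_real (c + d) * a + of_real d * b) (of_real c * a) = cmod (of_real d * (a + b))"
      by (simp add: dist_norm algebra_simps)
    also have "\<dots> = d * cmod (a + b)" using d0 by (simp add: norm_mult)
    also have "\<dots> \<le> d * (cmod a + cmod b)" using d0 by (simp add: norm_triangle_ineq)
    also have "\<dots> < e"
    proof -
      have pos: "cmod a + cmod b + 1 > 0" by (simp add: add_nonneg_pos)
      have "d * (cmod a + cmod b + 1) = e / 2" unfolding d_def
        using pos by (simp add: field_simps)
      thus ?thesis using d0 e by (simp add: algebra_simps)
    qed
    finally show ?thesis .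
  qed
  ultimately show "\<exists>y\<in>open_wedge a b. dist y (of_real c * a) < e" by blast
qed

lemma sin_shift_int: "sin (u + 2 * pi * of_int k) = sin u"
  by (simp add: sin_add)

lemma angle_reduce:
  assumes "sin u > 0" "sin (u - \<theta>) < 0" "0 < \<theta>" "\<theta> < pi"
  shows "\<exists>k::int. 0 < u + 2 * pi * of_int k \<and> u + 2 * pi * of_int k < \<theta>"
proof -
  define k where "k = - \<lfloor>u / (2 * pi)\<rfloor>"
  define v where "v = u + 2 * pi * of_int k"
  have fl: "of_int \<lfloor>u / (2 * pi)\<rfloor> \<le> u / (2 * pi)" "u / (2 * pi) < of_int \<lfloor>u / (2 * pi)\<rfloor> + 1"
    by linarith+
  have pi0: "pi > 0" by simp
  have "2 * pi * of_int \<lfloor>u / (2 * pi)\<rfloor> \<le> 2 * pi * (u / (2 * pi))"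
    using fl(1) pi0 by (intro mult_left_mono) auto
  hence "2 * pi * of_int \<lfloor>u / (2 * pi)\<rfloor> \<le> u" by simp
  hence v0: "0 \<le> v" unfolding v_def k_def by simp
  have "u < 2 * pi * (of_int \<lfloor>u / (2 * pi)\<rfloor> + 1)"
    using fl(2) pi0 by (simp add: field_simps)
  hence v2: "v < 2 * pi" unfolding v_def k_def by (simp add: algebra_simps)
  have sv: "sin v = sin u" unfolding v_def by (rule sin_shift_int)
  have sv2: "sin (v - \<theta>) = sin (u - \<theta>)"
    using sin_shift_int[of "u - \<theta>" k] unfolding v_def by (simp add: algebra_simps)
  have vpi: "v < pi"
  proof (rule ccontr)
    assume "\<not> v < pi"
    hence "sin (v - pi) \<ge> 0" using v2 by (intro sin_ge_zero) auto
    moreover have "sin (v - pi) = - sin v" by (simp add: sin_diff)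
    ultimately show False using sv assms(1) by simp
  qed
  have vpos: "v > 0" using v0 sv assms(1) by (cases "v = 0") auto
  have "v < \<theta>"
  proof (rule ccontr)
    assume "\<not> v < \<theta>"
    hence "sin (v - \<theta>) \<ge> 0" using vpi assms by (intro sin_ge_zero) auto
    thus False using sv2 assms(2) by simp
  qed
  thus ?thesis using vpos unfolding v_def by blast
qed

lemma wedge_mem:
  assumes "\<alpha> < \<psi>" "\<psi> < \<beta>" "\<beta> - \<alpha> < pi" "\<rho> > 0" "\<sigma> > 0" "r > 0"
  shows "rcis r \<psi> \<in> open_wedge (rcis \<rho> \<alpha>) (rcis \<sigma> \<beta>)"
proof -
  have "sin (\<beta> - \<alpha>) > 0" using assms by (intro sin_gt_zero) auto
  moreover have "sin (\<psi> - \<alpha>) > 0" using assms by (intro sin_gt_zero) auto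
  moreover have "sin (\<beta> - \<psi>) > 0" using assms by (intro sin_gt_zero) auto
  hence "sin (\<psi> - \<beta>) < 0" by (metis minus_diff_eq neg_0_less_iff_less sin_minus)
  ultimately show ?thesis using wedge_rcis_iff assms by blast
qed

lemma wedge_inv:
  assumes "x \<in> open_wedge (rcis \<rho> \<alpha>) (rcis \<sigma> \<beta>)" "0 < \<beta> - \<alpha>" "\<beta> - \<alpha> < pi" "\<rho> > 0" "\<sigma> > 0"
  shows "x \<noteq> 0 \<and> (\<exists>k::int. \<alpha> < Arg x + 2 * pi * of_int k \<and> Arg x + 2 * pi * of_int k < \<beta>)"
proof -
  have sb: "sin (\<beta> - \<alpha>) > 0" using assms by (intro sin_gt_zero) auto
  have x0: "x \<noteq> 0"
  proof
    assume "x = 0"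
    with assms(1) have "0 \<in> open_wedge (rcis \<rho> \<alpha>) (rcis \<sigma> \<beta>)" by simp
    moreover have "Im (rcis \<sigma> \<beta> / rcis \<rho> \<alpha>) > 0" using assms sb by (simp add: rcis_divide)
    ultimately show False using wedge_iff[of "rcis \<rho> \<alpha>" "rcis \<sigma> \<beta>" 0] assms by simp
  qed
  have "rcis (cmod x) (Arg x) \<in> open_wedge (rcis \<rho> \<alpha>) (rcis \<sigma> \<beta>)"
    using assms(1) by (simp add: rcis_cmod_Arg)
  hence "sin (Arg x - \<alpha>) > 0 \<and> sin (Arg x - \<beta>) < 0"
    using wedge_rcis_iff[OF assms(4,5) sb, of "cmod x"] x0 by simp
  hence "sin (Arg x - \<alpha>) > 0" "sin ((Arg x - \<alpha>) - (\<beta> - \<alpha>)) < 0" by simp_all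
  from angle_reduce[OF this assms(2,3)] obtain k :: int where
    "0 < Arg x - \<alpha> + 2 * pi * of_int k" "Arg x - \<alpha> + 2 * pi * of_int k < \<beta> - \<alpha>" by blast
  thus ?thesis using x0 by (intro conjI exI[of _ k]) auto
qed

lemma find_interval:
  fixes \<Phi> :: "nat \<Rightarrow> real"
  assumes "\<Phi> 0 \<le> \<psi>" "\<psi> < \<Phi> n"
  shows "\<exists>l<n. \<Phi> l \<le> \<psi> \<and> \<psi> < \<Phi> (Suc l)"
  using assms
proof (induction n)
  case 0 then show ?case by simp
next
  case (Suc n)
  show ?case
  proof (cases "\<psi> < \<Phi> n")
    case True
    then obtain l where "l < n" "\<Phi> l \<le> \<psi> \<and> \<psi> < \<Phi> (Suc l)" using Suc by blast
    then show ?thesis by (intro exI[of _ l]) auto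
  next
    case False
    then show ?thesis using Suc by (intro exI[of _ n]) auto
  qed
qed

lemma rcis_shift: "rcis r (\<psi> - 2 * pi) = rcis r \<psi>"
  by (simp add: rcis_def cis.ctr complex_eq_iff cos_diff sin_diff)

lemma rcis_shift': "rcis r (\<psi> + 2 * pi) = rcis r \<psi>"
  by (simp add: rcis_def cis.ctr complex_eq_iff cos_add sin_add)

lemma Phi_mono:
  fixes \<theta> :: "nat \<Rightarrow> real"
  assumes "\<forall>k<j. \<theta> k \<ge> 0" "i \<le> j"
  shows "(\<Sum>k<i. \<theta> k) \<le> (\<Sum>k<j. \<theta> k)"
  using assms by (intro sum_mono2) auto

theorem proposition2p2:
  fixes z :: "nat \<Rightarrow> complex" and eps :: "nat \<Rightarrow> nat" and n :: nat
  assumes "\<forall>l<n. Im (z l) > 0"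
    and "\<forall>l<n. eps l \<in> {0, 1}"
    and "n > 0 \<longrightarrow> eps 0 = 1"
  shows "hyperbolic_around_edge z eps n \<longleftrightarrow>
           (\<Prod>l<n. z l ^ eps l / cnj (z l) ^ (1 - eps l)) = 1 \<and>
           (\<Sum>l<n. Arg (z l)) = 2 * pi"
proof -
  define \<theta> where "\<theta> l = Arg (z l)" for l
  define r where "r l = z l ^ eps l / cnj (z l) ^ (1 - eps l)" for l
  define c where "c l = (if eps l = 1 then cmod (z l) else 1 / cmod (z l))" for l
  define \<Phi> where "\<Phi> l = (\<Sum>k<l. \<theta> k)" for l
  define \<rho> where "\<rho> l = (\<Prod>k<l. c k)" for l
  define P where "P l = (\<Prod>k<l. r k)" for l
  have th: "0 < \<theta> l \<and> \<theta> l < pi" if "l < n" for l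
    using assms(1) that Arg_lt_pi unfolding \<theta>_def by blast
  have z0: "z l \<noteq> 0" if "l < n" for l using assms(1) that by auto
  have c0: "c l > 0" if "l < n" for l using z0[OF that] unfolding c_def by auto
  have r_rcis: "r l = rcis (c l) (\<theta> l)" if "l < n" for l
  proof (cases "eps l = 1")
    case True
    then show ?thesis unfolding r_def c_def \<theta>_def by (simp add: rcis_cmod_Arg)
  next
    case False
    then have e0: "eps l = 0" using assms(2) that by auto
    have "r l = rcis 1 0 / rcis (cmod (z l)) (- Arg (z l))"
      unfolding r_def using e0 by (simp add: rcis_cnj[symmetric])
    also have "\<dots> = rcis (c l) (\<theta> l)" unfolding c_def \<theta>_def using e0 by (subst rcis_divide) simp
    finally show ?thesis .
  qed
  have rho0: "\<rho> l > 0" if "l \<le> n" for l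
    unfolding \<rho>_def using c0 that by (intro prod_pos) auto
  have P_rcis: "P l = rcis (\<rho> l) (\<Phi> l)" if "l \<le> n" for l
    using that
  proof (induction l)
    case 0 then show ?case by (simp add: P_def \<rho>_def \<Phi>_def rcis_def)
  next
    case (Suc l)
    then have "P (Suc l) = rcis (\<rho> l) (\<Phi> l) * rcis (c l) (\<theta> l)"
      using r_rcis[of l] by (simp add: P_def)
    then show ?case by (simp add: rcis_mult \<rho>_def \<Phi>_def)
  qed
  have P0: "P l \<noteq> 0" if "l \<le> n" for l using P_rcis[OF that] rho0[OF that] by simp
  have Phi_Suc: "\<Phi> (Suc l) = \<Phi> l + \<theta> l" for l unfolding \<Phi>_def by simp
  have Phi_mono': "\<Phi> i \<le> \<Phi> j" if "i \<le> j" "j \<le> n" for i j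
    unfolding \<Phi>_def using th that by (intro Phi_mono) (auto intro: less_imp_le)
  have Phi0: "\<Phi> 0 = 0" unfolding \<Phi>_def by simp
  have wedge_eq: "open_wedge (P l) (P (Suc l)) = open_wedge (rcis (\<rho> l) (\<Phi> l)) (rcis (\<rho> (Suc l)) (\<Phi> (Suc l)))"
    if "l < n" for l using that P_rcis by simp
  have dev_P: "developing_seq z eps n P"
    unfolding developing_seq_def
  proof (intro conjI allI impI)
    show "P 0 = 1" by (simp add: P_def)
  next
    fix l assume l: "l < n"
    have PS: "P (Suc l) = P l * r l" by (simp add: P_def)
    show "P (Suc l) \<noteq> 0" using P0 l by simp
    have "P (Suc l) / P l = r l" using PS P0[of l] l by simp
    thus "Im (P (Suc l) / P l) > 0" using r_rcis[OF l] c0[OF l] th[OF l] by (simp add: sin_gt_zero)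
    show "copy_edge_inv (eps l) (P l) (P (Suc l)) = z l"
    proof (cases "eps l = 1")
      case True
      then show ?thesis unfolding copy_edge_inv_def edge_inv_pos_def
        using \<open>P (Suc l) / P l = r l\<close> by (simp add: r_def)
    next
      case False
      then have e0: "eps l = 0" using assms(2) l by auto
      have "cnj (P l) / cnj (P (Suc l)) = cnj (P l / P (Suc l))" by simp
      also have "P l / P (Suc l) = 1 / r l" using PS P0[of l] l by simp
      also have "1 / r l = cnj (z l)" unfolding r_def using e0 by simp
      finally show ?thesis unfolding copy_edge_inv_def edge_inv_pos_def using e0 by simp
    qed
  qed
  have dev_eq: "w l = P l" if "developing_seq z eps n w" "l \<le> n" for w l
    using that(2)
  proof (induction l)
    case 0 then show ?case using that(1) by (simp add: developing_seq_def P_def)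
  next
    case (Suc l)
    then have l: "l < n" by simp
    have IH: "w l = P l" using Suc by simp
    have wl0: "w l \<noteq> 0" using IH P0 l by simp
    have ws0: "w (Suc l) \<noteq> 0" using that(1) l unfolding developing_seq_def by blast
    have ce: "copy_edge_inv (eps l) (w l) (w (Suc l)) = z l"
      using that(1) l unfolding developing_seq_def by blast
    have "w (Suc l) = w l * r l"
    proof (cases "eps l = 1")
      case True
      then show ?thesis using ce wl0 unfolding copy_edge_inv_def edge_inv_pos_def r_def
        by (auto simp: field_simps)
    next
      case False
      then have e0: "eps l = 0" using assms(2) l by auto
      have "cnj (w l) / cnj (w (Suc l)) = z l" using ce e0 unfolding copy_edge_inv_def edge_inv_pos_def by simp
      hence "cnj (w l / w (Suc l)) = z l" by simp
      hence "w l / w (Suc l) = cnj (z l)" by (metis complex_cnj_cnj)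
      thus ?thesis using e0 ws0 z0[OF l] unfolding r_def by (auto simp: field_simps)
    qed
    then show ?case using IH by (simp add: P_def)
  qed
  have prodP: "(\<Prod>l<n. z l ^ eps l / cnj (z l) ^ (1 - eps l)) = P n"
    unfolding P_def r_def by simp
  have sumPhi: "(\<Sum>l<n. Arg (z l)) = \<Phi> n" unfolding \<Phi>_def \<theta>_def by simp
  show ?thesis
  proof
    assume "hyperbolic_around_edge z eps n"
    then obtain w where dw: "developing_seq z eps n w" and wn: "w n = w 0"
      and disj: "\<forall>l<n. \<forall>m<n. l \<noteq> m \<longrightarrow>
            open_wedge (w l) (w (Suc l)) \<inter> open_wedge (w m) (w (Suc m)) = {}"
      and cov: "(\<Union>l<n. closure (open_wedge (w l) (w (Suc l)))) = UNIV"
      unfolding hyperbolic_around_edge_def by blast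
    have wP: "w l = P l" if "l \<le> n" for l using dev_eq[OF dw that] .
    have Pn: "P n = 1" using wn wP[of n] wP[of 0] by (simp add: P_def)
    have npos: "n > 0" using cov by (cases n) auto
    have "cmod (P n) = \<rho> n" using P_rcis[of n] rho0[of n] by simp
    hence rn: "\<rho> n = 1" using Pn by simp
    have "Re (P n) = cos (\<Phi> n)" using P_rcis[of n] rn by simp
    hence "cos (\<Phi> n) = 1" using Pn by simp
    then obtain k :: int where k: "\<Phi> n = of_int k * 2 * pi" using cos_one_2pi_int by blast
    have Phin_pos: "\<Phi> n > 0"
    proof -
      have "\<Phi> n \<ge> \<Phi> 1" using Phi_mono'[of 1 n] npos by simp
      moreover have "\<Phi> 1 = \<theta> 0" unfolding \<Phi>_def by simp
      ultimately show ?thesis using th[of 0] npos by simp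
    qed
    have "k \<ge> 1"
    proof (rule ccontr)
      assume "\<not> k \<ge> 1" hence "of_int k \<le> (0::real)" by simp
      hence "of_int k * 2 * pi \<le> 0" by (simp add: mult_nonpos_nonneg)
      thus False using Phin_pos k by simp
    qed
    moreover have "\<not> k \<ge> 2"
    proof
      assume k2: "k \<ge> 2"
      hence "(of_int k :: real) \<ge> 2" by simp
      hence big: "\<Phi> n \<ge> 4 * pi" using k by simp
      have "\<Phi> 0 \<le> 2 * pi" "2 * pi < \<Phi> n" using Phi0 big pi_gt_zero by linarith+
      from find_interval[OF this] obtain m where m: "m < n" "\<Phi> m \<le> 2 * pi" "2 * pi < \<Phi> (Suc m)"
        by blast
      have "m \<noteq> 0"
      proof
        assume "m = 0"
        hence "2 * pi < \<theta> 0" using m(3) Phi_Suc[of 0] Phi0 by simp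
        thus False using th[of 0] npos pi_gt_zero by linarith
      qed
      define \<mu> where "\<mu> = min (\<theta> 0) (\<Phi> (Suc m) - 2 * pi)"
      define \<psi> where "\<psi> = 2 * pi + \<mu> / 2"
      have mu: "0 < \<mu>" "\<mu> \<le> \<theta> 0" "\<mu> \<le> \<Phi> (Suc m) - 2 * pi"
        using th[of 0] npos m unfolding \<mu>_def by auto
      have ps1: "2 * pi < \<psi>" "\<psi> < \<Phi> (Suc m)" "\<psi> - 2 * pi < \<theta> 0"
        using mu unfolding \<psi>_def by linarith+
      have "rcis 1 \<psi> \<in> open_wedge (P m) (P (Suc m))"
        unfolding wedge_eq[OF m(1)]
        using m th[OF m(1)] ps1 Phi_Suc[of m] rho0[of m] rho0[of "Suc m"]
        by (intro wedge_mem) auto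
      moreover have "rcis 1 (\<psi> - 2 * pi) \<in> open_wedge (P 0) (P (Suc 0))"
        unfolding wedge_eq[OF npos]
        using th[OF npos] ps1 Phi_Suc[of 0] Phi0 rho0[of 0] rho0[of "Suc 0"] npos
        by (intro wedge_mem) auto
      ultimately have "rcis 1 \<psi> \<in> open_wedge (w m) (w (Suc m)) \<inter> open_wedge (w 0) (w (Suc 0))"
        using wP m npos by (simp add: rcis_shift)
      thus False using disj m(1) npos \<open>m \<noteq> 0\<close> by blast
    qed
    ultimately have "k = 1" by simp
    hence "\<Phi> n = 2 * pi" using k by simp
    thus "(\<Prod>l<n. z l ^ eps l / cnj (z l) ^ (1 - eps l)) = 1 \<and> (\<Sum>l<n. Arg (z l)) = 2 * pi"
      using prodP Pn sumPhi by simp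
  next
    assume rhs: "(\<Prod>l<n. z l ^ eps l / cnj (z l) ^ (1 - eps l)) = 1 \<and> (\<Sum>l<n. Arg (z l)) = 2 * pi"
    hence Pn: "P n = 1" and Phin: "\<Phi> n = 2 * pi" using prodP sumPhi by auto
    have npos: "n > 0" using Phin Phi0 by (cases n) auto
    have Phi_rng: "0 \<le> \<Phi> l \<and> \<Phi> l \<le> 2 * pi" if "l \<le> n" for l
      using Phi_mono'[of 0 l] Phi_mono'[of l n] that Phi0 Phin by simp
    have Phi_strict: "\<Phi> (Suc l) \<le> \<Phi> m" if "l < m" "m \<le> n" for l m
      using Phi_mono' that by simp
    show "hyperbolic_around_edge z eps n"
      unfolding hyperbolic_around_edge_def
    proof (intro exI[of _ P] conjI allI impI)
      show "developing_seq z eps n P" by (rule dev_P)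
      show "P n = P 0" using Pn by (simp add: P_def)
    next
      fix l m assume l: "l < n" and m: "m < n" and lm: "l \<noteq> m"
      show "open_wedge (P l) (P (Suc l)) \<inter> open_wedge (P m) (P (Suc m)) = {}"
      proof (rule ccontr)
        assume "open_wedge (P l) (P (Suc l)) \<inter> open_wedge (P m) (P (Suc m)) \<noteq> {}"
        then obtain x where xl: "x \<in> open_wedge (P l) (P (Suc l))" and xm: "x \<in> open_wedge (P m) (P (Suc m))"
          by blast
        from wedge_inv[OF xl[unfolded wedge_eq[OF l]]] th[OF l] Phi_Suc[of l] rho0[of l] rho0[of "Suc l"] l
        obtain k1 :: int where k1: "\<Phi> l < Arg x + 2 * pi * of_int k1" "Arg x + 2 * pi * of_int k1 < \<Phi> (Suc l)"
          by auto
        from wedge_inv[OF xm[unfolded wedge_eq[OF m]]] th[OF m] Phi_Suc[of m] rho0[of m] rho0[of "Suc m"] m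
        obtain k2 :: int where k2: "\<Phi> m < Arg x + 2 * pi * of_int k2" "Arg x + 2 * pi * of_int k2 < \<Phi> (Suc m)"
          by auto
        have r1: "0 \<le> \<Phi> l" "\<Phi> (Suc l) \<le> 2 * pi" using Phi_rng[of l] Phi_rng[of "Suc l"] l by auto
        have r2: "0 \<le> \<Phi> m" "\<Phi> (Suc m) \<le> 2 * pi" using Phi_rng[of m] Phi_rng[of "Suc m"] m by auto
        have "2 * pi * of_int (k1 - k2) < 2 * pi * 1" using k1 k2 r1 r2 by (simp add: algebra_simps)
        hence a: "of_int (k1 - k2) < (1::real)" by (metis mult_less_cancel_left_pos pi_gt_zero zero_less_numeral mult_pos_pos)
        have "2 * pi * (-1) < 2 * pi * of_int (k1 - k2)" using k1 k2 r1 r2 by (simp add: algebra_simps)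
        hence b: "(-1::real) < of_int (k1 - k2)" by (metis mult_less_cancel_left_pos pi_gt_zero zero_less_numeral mult_pos_pos)
        have "k1 - k2 < 1" using a by linarith
        moreover have "k1 - k2 > -1" using b by linarith
        ultimately have "k1 = k2" by simp
        show False
        proof (cases "l < m")
          case True
          then show False using Phi_strict[of l m] m k1 k2 \<open>k1 = k2\<close> by simp
        next
          case False
          then have "m < l" using lm by simp
          then show False using Phi_strict[of m l] l k1 k2 \<open>k1 = k2\<close> by simp
        qed
      qed
    next
      show "(\<Union>l<n. closure (open_wedge (P l) (P (Suc l)))) = UNIV"
      proof (rule set_eqI, rule iffI)
        fix x :: complex
        show "x \<in> (\<Union>l<n. closure (open_wedge (P l) (P (Suc l))))"
        proof (cases "x = 0")
          case True
          have "of_real 0 * P 0 \<in> closure (open_wedge (P 0) (P (Suc 0)))"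
            by (rule closure_wedge_ray) simp
          then show ?thesis using True npos by auto
        next
          case False
          define \<psi> where "\<psi> = (if Arg x < 0 then Arg x + 2 * pi else Arg x)"
          have psr: "0 \<le> \<psi>" "\<psi> < 2 * pi" using Arg_bounded[of x] unfolding \<psi>_def by auto
          have xr: "x = rcis (cmod x) \<psi>" unfolding \<psi>_def by (simp add: rcis_shift' rcis_cmod_Arg)
          obtain l where l: "l < n" "\<Phi> l \<le> \<psi>" "\<psi> < \<Phi> (Suc l)"
            using find_interval[of \<Phi> \<psi> n] psr Phi0 Phin by auto
          have "x \<in> closure (open_wedge (P l) (P (Suc l)))"
          proof (cases "\<Phi> l < \<psi>")
            case True
            have "rcis (cmod x) \<psi> \<in> open_wedge (P l) (P (Suc l))"
              unfolding wedge_eq[OF l(1)]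
              using True l th[OF l(1)] Phi_Suc[of l] rho0[of l] rho0[of "Suc l"] False
              by (intro wedge_mem) auto
            then show ?thesis using xr closure_subset by auto
          next
            case False
            hence "\<psi> = \<Phi> l" using l by simp
            hence "x = of_real (cmod x / \<rho> l) * P l"
              using xr P_rcis[of l] rho0[of l] l by (simp add: rcis_def)
            moreover have "of_real (cmod x / \<rho> l) * P l \<in> closure (open_wedge (P l) (P (Suc l)))"
              using rho0[of l] l by (intro closure_wedge_ray) simp
            ultimately show ?thesis by simp
          qed
          then show ?thesis using l by auto
        qed
      qed simp
    qed
  qed
qed

end
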